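(* Fix integers $t\ge 1$, $C_1,\dots,C_t\ge 1$, and $A_1,\dots,A_t$ with $0\le A_i\le C_i/2$ for all $i$. Let $S$ be the multiset of positive integers defined as follows: for each $i=1,\dots,t$, $S$ contains one copy of each positive integer congruent to $A_i$ modulo $C_i$ and, separately, one copy of each positive integer congruent to $-A_i$ modulo $C_i$, all these copies being regarded as distinct elements. (In particular, if $A_i\equiv -A_i \pmod{C_i}$, i.e. $A_i=0$ or $A_i=C_i/2$, that residue class contributes two distinct copies of each of its positive elements.) Let $D_S(N)$ be the number of partitions of $N$ into distinct elements of $S$, where, if no $A_i$ equals $0$, only partitions with an odd number of parts are counted. Let $r=\max(z,1)-1$, where $z$ is the number of indices $i$ with $A_i=0$. Then for every integer $N\ge 1$, $2^{r}\cdot D_S(N)$ equals the number of tuples $(\nu_1,\dots,\nu_t;d_1,\dots,d_t)$ with $\nu_i\in P$ and $d_i\in\mathbb Z$ for all $i$, $\sum_{i=1}^t d_i$ odd, and $$\sum_{i=1}^{t}C_i|\nu_i|+\sum_{i=1}^{t}C_i\binom{d_i}{2}+\sum_{i=1}^{t}A_i d_i=N.$$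
   Context: $P$ denotes the set of all integer partitions into positive parts (including the empty partition $\emptyset$, the unique partition of $0$); for a partition $\lambda$, $|\lambda|$ is the sum of its parts. For $d\in\mathbb Z$, $\binom{d}{2}=d(d-1)/2$. A partition of $N$ into distinct elements of a multiset $S$ is a finite set of distinct elements of $S$ (distinct copies of the same integer count as distinct elements) whose values sum to $N$. *)

theory Defs
  imports "HOL-Library.Multiset" "HOL-Library.FuncSet" "HOL-Number_Theory.Cong"
begin

definition Ptns :: "nat multiset set" where
  "Ptns = {\<nu>. \<forall>x\<in>#\<nu>. 0 < x}"

definition psize :: "nat multiset \<Rightarrow> nat" where
  "psize \<nu> = sum_mset \<nu>"

definition binom2 :: "int \<Rightarrow> int" where
  "binom2 d = d * (d - 1) div 2"

text \<open>Elements of the multiset S, labelled as (i, sign, value): for index i < t,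
  sign True means the copy from the class A_i mod C_i, sign False the copy from
  the class -A_i mod C_i. Distinct labels are distinct elements.\<close>
definition S_elems :: "nat \<Rightarrow> (nat \<Rightarrow> int) \<Rightarrow> (nat \<Rightarrow> int) \<Rightarrow> (nat \<times> bool \<times> int) set" where
  "S_elems t C A = {(i, s, m). i < t \<and> 0 < m \<and>
      (if s then [m = A i] (mod C i) else [m = - A i] (mod C i))}"

definition D_S :: "nat \<Rightarrow> (nat \<Rightarrow> int) \<Rightarrow> (nat \<Rightarrow> int) \<Rightarrow> int \<Rightarrow> nat" where
  "D_S t C A N = card {X. finite X \<and> X \<subseteq> S_elems t C A \<and>
      (\<Sum>(i, s, m)\<in>X. m) = N \<and>
      ((\<forall>i<t. A i \<noteq> 0) \<longrightarrow> odd (card X))}"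

end

theory Submission
  imports Defs
begin


definition mX :: "int set \<Rightarrow> int set" where "mX M = {x\<in>M. 0 \<le> x}"
definition mH :: "int set \<Rightarrow> int set" where "mH M = {h. h < 0 \<and> h \<notin> M}"
definition good :: "int set \<Rightarrow> bool" where
  "good M \<longleftrightarrow> (\<exists>lo hi. {..<lo} \<subseteq> M \<and> M \<subseteq> {..<hi})"
definition charge :: "int set \<Rightarrow> int" where
  "charge M = int (card (mX M)) - int (card (mH M))"
definition energy :: "int set \<Rightarrow> int" where
  "energy M = (\<Sum>x\<in>mX M. x) + (\<Sum>h\<in>mH M. - h)"

lemma good_fin:
  assumes "good M" shows "finite (mX M)" "finite (mH M)"
proof -
  obtain lo hi where h: "{..<lo} \<subseteq> M" "M \<subseteq> {..<hi}" using assms good_def by blast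
  have "mX M \<subseteq> {0..<hi}" using h unfolding mX_def by auto
  then show "finite (mX M)" using finite_subset by blast
  have "mH M \<subseteq> {lo..<0}" using h unfolding mH_def by force
  then show "finite (mH M)" using finite_subset by blast
qed

lemma insert_props:
  assumes g: "good M" and x: "x \<notin> M"
  shows "good (insert x M)" "charge (insert x M) = charge M + 1"
    "energy (insert x M) = energy M + x"
proof -
  obtain lo hi where h: "{..<lo} \<subseteq> M" "M \<subseteq> {..<hi}" using g good_def by blast
  show "good (insert x M)" unfolding good_def
    by (rule exI[of _ lo], rule exI[of _ "max hi (x+1)"]) (use h in auto)
  note f = good_fin[OF g]
  have "charge (insert x M) = charge M + 1 \<and> energy (insert x M) = energy M + x"
  proof (cases "0 \<le> x")
    case True
    have 1: "mX (insert x M) = insert x (mX M)" using True unfolding mX_def by auto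
    have 2: "mH (insert x M) = mH M" using True unfolding mH_def by auto
    have 3: "x \<notin> mX M" using x unfolding mX_def by auto
    show ?thesis unfolding charge_def energy_def 1 2 using f 3 by simp
  next
    case False
    have 1: "mX (insert x M) = mX M" using False unfolding mX_def by auto
    have 2: "mH (insert x M) = mH M - {x}" using False unfolding mH_def by auto
    have 3: "x \<in> mH M" using x False unfolding mH_def by auto
    have c: "card (mH M) = Suc (card (mH M - {x}))" 
      by (metis card_Suc_Diff1 f(2) 3)
    have s: "(\<Sum>h\<in>mH M. - h) = - x + (\<Sum>h\<in>mH M - {x}. - h)"
      using f 3 by (simp add: sum.remove)
    show ?thesis unfolding charge_def energy_def 1 2 using c s by simp
  qed
  then show "charge (insert x M) = charge M + 1" "energy (insert x M) = energy M + x" by auto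
qed

lemma binom2_2: "2 * binom2 d = d * (d - 1)"
proof -
  have "even (d * (d - 1))" by simp
  then show ?thesis unfolding binom2_def by simp
qed

lemma sum_upto2n: "2 * (\<Sum>x\<in>{0..<int n}. x) = int n * (int n - 1)"
proof (induction n)
  case 0 then show ?case by simp
next
  case (Suc n)
  have "{0..<int (Suc n)} = insert (int n) {0..<int n}" by auto
  then show ?case using Suc by (simp add: algebra_simps)
qed

lemma sum_upto2: "0 \<le> (k::int) \<Longrightarrow> 2 * (\<Sum>x\<in>{0..<k}. x) = k * (k - 1)"
  using sum_upto2n[of "nat k"] by simp

lemma down_props: "good {..<k}" "charge {..<k} = k" "energy {..<k} = binom2 k"
proof -
  show "good {..<k}" unfolding good_def by auto
  have "charge {..<k} = k \<and> 2 * energy {..<k} = k * (k - 1)"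
  proof (cases "0 \<le> k")
    case True
    have 1: "mX {..<k} = {0..<k}" unfolding mX_def by auto
    have 2: "mH {..<k} = {}" unfolding mH_def using True by auto
    show ?thesis unfolding charge_def energy_def 1 2 using True sum_upto2[OF True] by simp
  next
    case False
    have 1: "mX {..<k} = {}" unfolding mX_def using False by auto
    have 2: "mH {..<k} = {k..<0}" unfolding mH_def using False by auto
    have "(\<Sum>h\<in>{k..<0}. - h) = (\<Sum>x\<in>{0..<-k}. x + 1)"
      by (rule sum.reindex_bij_witness[of _ "\<lambda>x. - x - 1" "\<lambda>h. - h - 1"]) auto
    also have "\<dots> = (\<Sum>x\<in>{0..<-k}. x) + (-k)" using False by (simp add: sum.distrib)
    finally have "2 * (\<Sum>h\<in>{k..<0}. - h) = (-k) * (-k - 1) + 2 * (-k)"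
      using sum_upto2[of "-k"] False by simp
    then show ?thesis unfolding charge_def energy_def 1 2 using False by (simp add: algebra_simps)
  qed
  then show "charge {..<k} = k" "energy {..<k} = binom2 k" using binom2_2[of k] by auto
qed

fun maya :: "int \<Rightarrow> nat list \<Rightarrow> int set" where
  "maya d [] = {..<d}"
| "maya d (p # ps) = insert (int p + d - 1) (maya (d - 1) ps)"

definition valid :: "nat list \<Rightarrow> bool" where
  "valid ps \<longleftrightarrow> sorted_wrt (\<ge>) ps \<and> (\<forall>p\<in>set ps. 0 < p)"

fun hd0 :: "nat list \<Rightarrow> nat" where "hd0 [] = 0" | "hd0 (p # _) = p"

lemma valid_Cons: "valid (p # ps) \<longleftrightarrow> valid ps \<and> 0 < p \<and> hd0 ps \<le> p"
  unfolding valid_def by (cases ps) auto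

lemma maya_props:
  assumes "valid ps"
  shows "good (maya d ps) \<and> charge (maya d ps) = d \<and>
    energy (maya d ps) = binom2 d + int (sum_list ps) \<and> (\<forall>y\<in>maya d ps. y < int (hd0 ps) + d)"
  using assms
proof (induction ps arbitrary: d)
  case Nil
  then show ?case using down_props[of d] by simp
next
  case (Cons p ps)
  have v: "valid ps" "0 < p" "hd0 ps \<le> p" using Cons.prems valid_Cons by auto
  note IH = Cons.IH[OF v(1), of "d - 1"]
  have nin: "int p + d - 1 \<notin> maya (d - 1) ps" using IH v by fastforce
  note ip = insert_props[OF conjunct1[OF IH] nin]
  have b: "binom2 (d - 1) + (d - 1) = binom2 d"
    using binom2_2[of d] binom2_2[of "d-1"] by (simp add: algebra_simps)
  show ?case using ip IH b v by auto
qed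


lemma maya_inj:
  assumes "valid ps" "valid qs" "maya d ps = maya d qs"
  shows "ps = qs"
  using assms
proof (induction ps arbitrary: qs d)
  case Nil
  then show ?case
  proof (cases qs)
    case (Cons q qs')
    have "int q + d - 1 \<in> {..<d}" using Nil.prems(3) Cons by (metis insertI1 maya.simps)
    then show ?thesis using Nil(2) Cons valid_Cons by simp
  qed simp
next
  case (Cons p ps)
  note prems = Cons.prems and IH = Cons.IH
  show ?case
  proof (cases qs)
    case Nil
    have "int p + d - 1 \<in> {..<d}" using prems(3) Nil by (metis insertI1 maya.simps)
    then show ?thesis using prems(1) valid_Cons by simp
  next
    case Cons2: (Cons q qs')
    have vp: "valid ps" "0 < p" "hd0 ps \<le> p" using prems valid_Cons by auto
    have vq: "valid qs'" "0 < q" "hd0 qs' \<le> q" using prems Cons2 valid_Cons by auto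
    have bp: "\<forall>y\<in>maya (d-1) ps. y < int p + d - 1" using maya_props[OF vp(1), of "d-1"] vp by fastforce
    have bq: "\<forall>y\<in>maya (d-1) qs'. y < int q + d - 1" using maya_props[OF vq(1), of "d-1"] vq by fastforce
    have E: "insert (int p + d - 1) (maya (d - 1) ps) = insert (int q + d - 1) (maya (d - 1) qs')"
      using prems(3) Cons2 by simp
    have pq: "p = q"
    proof (rule ccontr)
      assume "p \<noteq> q"
      then have "int p + d - 1 \<noteq> int q + d - 1" by simp
      then have "int p + d - 1 \<in> maya (d-1) qs'" "int q + d - 1 \<in> maya (d-1) ps"
        using E by (metis insertE insertI1)+
      then show False using bp bq by fastforce
    qed
    have "maya (d - 1) ps = maya (d - 1) qs'"
    proof -
      have "maya (d - 1) ps = insert (int p + d - 1) (maya (d - 1) ps) - {int p + d - 1}"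
        using bp by auto
      also have "\<dots> = maya (d - 1) qs'" using E pq bq by auto
      finally show ?thesis .
    qed
    then have "ps = qs'" using IH vp(1) vq(1) by blast
    then show ?thesis using pq Cons2 by simp
  qed
qed



definition invs :: "int set \<Rightarrow> (int \<times> int) set" where
  "invs M = {(a, b). a \<in> M \<and> b \<notin> M \<and> b < a}"

lemma maya_surj:
  assumes "good M" shows "\<exists>ps. valid ps \<and> M = maya (charge M) ps"
  using assms
proof (induction "card (invs M)" arbitrary: M rule: less_induct)
  case less
  obtain lo hi where h: "{..<lo} \<subseteq> M" "M \<subseteq> {..<hi}" using less.prems good_def by blast
  have finv: "finite (invs M)"
  proof -
    have "invs M \<subseteq> {lo..<hi} \<times> {lo..<hi}" unfolding invs_def using h by force
    then show ?thesis using finite_subset by blast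
  qed
  define L where "L = M \<inter> {lo - 1..}"
  have finL: "finite L"
    unfolding L_def by (rule finite_subset[of _ "{lo-1..<hi}"]) (use h in auto)
  have loL: "lo - 1 \<in> L" unfolding L_def using h by auto
  define m where "m = Max L"
  have mM: "m \<in> M" using Max_in[OF finL] loL unfolding m_def L_def by auto
  have mmax: "\<forall>y\<in>M. y \<le> m"
  proof
    fix y assume y: "y \<in> M"
    show "y \<le> m"
    proof (cases "lo - 1 \<le> y")
      case True then have "y \<in> L" using y L_def by auto
      then show ?thesis using Max_ge[OF finL] m_def by auto
    next
      case False
      have "lo - 1 \<le> m" using Max_ge[OF finL loL] m_def by auto
      then show ?thesis using False by auto
    qed
  qed
  show ?case
  proof (cases "\<forall>b<m. b \<in> M")
    case True
    have "M = {..<m+1}" using True mmax mM by force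
    then show ?thesis using down_props(2)[of "m+1"] by (intro exI[of _ "[]"]) (simp add: valid_def)
  next
    case False
    then obtain b where b: "b < m" "b \<notin> M" by auto
    define M' where "M' = M - {m}"
    have gM': "good M'" unfolding good_def M'_def
      by (rule exI[of _ "min lo m"], rule exI[of _ hi]) (use h in auto)
    have mM': "m \<notin> M'" and MM': "M = insert m M'" using mM unfolding M'_def by auto
    have ch: "charge M = charge M' + 1" using insert_props(2)[OF gM' mM'] MM' by simp
    have sub: "invs M' \<subset> invs M"
    proof
      show "invs M' \<subseteq> invs M" unfolding invs_def M'_def using mmax by auto
      have "(m, b) \<in> invs M" "(m, b) \<notin> invs M'" unfolding invs_def M'_def using b mM by auto
      then show "invs M' \<noteq> invs M" by blast
    qed
    have "card (invs M') < card (invs M)" using psubset_card_mono[OF finv sub] .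
    then obtain ps where ps: "valid ps" "M' = maya (charge M') ps" using less.hyps gM' by blast
    define c where "c = charge M"
    have M'c: "M' = maya (c - 1) ps" using ps ch c_def by simp
    have key: "1 \<le> m - c + 1 \<and> int (hd0 ps) \<le> m - c + 1"
    proof (cases ps)
      case Nil
      then have M'e: "M' = {..<c - 1}" using M'c by simp
      then have "c - 1 \<le> m" using mM' by auto
      moreover have "m \<noteq> c - 1"
      proof
        assume "m = c - 1"
        then have "M = {..<c}" using MM' M'e by auto
        moreover have "b \<in> {..<c}" using b(1) `m = c - 1` by simp
        ultimately show False using b(2) by simp
      qed
      ultimately show ?thesis using Nil by simp
    next
      case (Cons q qs)
      then have "int q + (c - 1) - 1 \<in> M'" using M'c by simp
      then have "int q + (c - 1) - 1 < m" using mmax mM' MM' by (metis insert_iff order_le_less)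
      moreover have "0 < q" using ps(1) Cons valid_def by auto
      ultimately show ?thesis using Cons by simp
    qed
    define p where "p = nat (m - c + 1)"
    have pm: "int p = m - c + 1" using key p_def by simp
    have "valid (p # ps)" using valid_Cons ps(1) key pm by auto
    moreover have "M = maya c (p # ps)" using MM' M'c pm by simp
    ultimately show ?thesis by (metis c_def)
  qed
qed



definition Lp :: "nat multiset \<Rightarrow> nat list" where
  "Lp \<nu> = rev (sorted_list_of_multiset \<nu>)"

lemma Lp_valid: "\<nu> \<in> Ptns \<Longrightarrow> valid (Lp \<nu>)"
  unfolding valid_def Lp_def Ptns_def
  by (auto simp: sorted_wrt_rev sorted_sorted_list_of_multiset)

lemma Lp_mset: "mset (Lp \<nu>) = \<nu>"
  unfolding Lp_def by simp

lemma Lp_sum: "sum_list (Lp \<nu>) = psize \<nu>"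
  unfolding psize_def by (metis Lp_mset sum_mset_sum_list)

lemma mset_Ptns: "valid ps \<Longrightarrow> mset ps \<in> Ptns"
  unfolding valid_def Ptns_def by auto

lemma Lp_of_mset: assumes "valid ps" shows "Lp (mset ps) = ps"
proof -
  have s: "sorted (rev ps)" using assms unfolding valid_def by (simp add: sorted_wrt_rev)
  have "sorted_list_of_multiset (mset ps) = rev ps"
    by (simp add: sorted_list_of_multiset_mset properties_for_sort s)
  then show ?thesis unfolding Lp_def by simp
qed

definition Phi :: "nat multiset \<times> int \<Rightarrow> int set" where
  "Phi x = maya (snd x) (Lp (fst x))"

definition Phinv :: "int set \<Rightarrow> nat multiset \<times> int" where
  "Phinv M = (mset (SOME ps. valid ps \<and> M = maya (charge M) ps), charge M)"

lemma Phi_props: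
  assumes "x \<in> Ptns \<times> UNIV"
  shows "good (Phi x)" "charge (Phi x) = snd x" "energy (Phi x) = binom2 (snd x) + int (psize (fst x))"
  using maya_props[OF Lp_valid, of "fst x" "snd x"] assms Lp_sum unfolding Phi_def by auto

lemma Phinv_Phi: assumes "x \<in> Ptns \<times> UNIV" shows "Phinv (Phi x) = x"
proof -
  obtain \<nu> d where x: "x = (\<nu>, d)" "\<nu> \<in> Ptns" using assms by auto
  have v: "valid (Lp \<nu>)" using Lp_valid x by simp
  have c: "charge (Phi x) = d" using Phi_props(2)[OF assms] x by simp
  define ps where "ps = (SOME ps. valid ps \<and> Phi x = maya (charge (Phi x)) ps)"
  have "valid (Lp \<nu>) \<and> Phi x = maya (charge (Phi x)) (Lp \<nu>)" using v c x unfolding Phi_def by simp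
  then have ps: "valid ps \<and> Phi x = maya (charge (Phi x)) ps" unfolding ps_def by (rule someI)
  have "ps = Lp \<nu>" using maya_inj[of ps "Lp \<nu>" d] ps v c x unfolding Phi_def by simp
  then show ?thesis unfolding Phinv_def ps_def[symmetric] using c x Lp_mset by simp
qed

lemma Phi_Phinv: assumes "good M" shows "Phi (Phinv M) = M" "Phinv M \<in> Ptns \<times> UNIV"
proof -
  define ps where "ps = (SOME ps. valid ps \<and> M = maya (charge M) ps)"
  have ps: "valid ps \<and> M = maya (charge M) ps" unfolding ps_def by (rule someI_ex) (rule maya_surj[OF assms])
  show "Phi (Phinv M) = M" unfolding Phinv_def ps_def[symmetric] Phi_def using ps Lp_of_mset by simp
  show "Phinv M \<in> Ptns \<times> UNIV" unfolding Phinv_def ps_def[symmetric] using ps mset_Ptns by simp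
qed



lemma card_R_G:
  "card {f \<in> {..<t} \<rightarrow>\<^sub>E (Ptns \<times> (UNIV :: int set)).
       odd (\<Sum>i<t. snd (f i)) \<and>
       (\<Sum>i<t. C i * int (psize (fst (f i)))) + (\<Sum>i<t. C i * binom2 (snd (f i)))
         + (\<Sum>i<t. A i * snd (f i)) = N}
   = card {g \<in> {..<t} \<rightarrow>\<^sub>E Collect good. odd (\<Sum>i<t. charge (g i)) \<and>
       (\<Sum>i<t. C i * energy (g i) + A i * charge (g i)) = N}"
  (is "card ?R = card ?G")
proof (rule bij_betw_same_card[of "\<lambda>f. restrict (\<lambda>i. Phi (f i)) {..<t}"],
       rule bij_betw_byWitness[of _ "\<lambda>g. restrict (\<lambda>i. Phinv (g i)) {..<t}"])
  show "\<forall>f\<in>?R. restrict (\<lambda>i. Phinv (restrict (\<lambda>i. Phi (f i)) {..<t} i)) {..<t} = f"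
  proof
    fix f assume f: "f \<in> ?R"
    show "restrict (\<lambda>i. Phinv (restrict (\<lambda>i. Phi (f i)) {..<t} i)) {..<t} = f"
    proof (rule PiE_ext[of _ "{..<t}" "\<lambda>_. Ptns \<times> UNIV"])
      show "f \<in> {..<t} \<rightarrow>\<^sub>E Ptns \<times> UNIV" using f by simp
      have "\<And>i. i < t \<Longrightarrow> f i \<in> Ptns \<times> UNIV" using f by (auto simp: PiE_def Pi_def)
      then show "restrict (\<lambda>i. Phinv (restrict (\<lambda>i. Phi (f i)) {..<t} i)) {..<t} \<in> {..<t} \<rightarrow>\<^sub>E Ptns \<times> UNIV"
        using Phinv_Phi by auto
      fix i assume "i \<in> {..<t}"
      then show "restrict (\<lambda>i. Phinv (restrict (\<lambda>i. Phi (f i)) {..<t} i)) {..<t} i = f i"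
        using Phinv_Phi \<open>\<And>i. i < t \<Longrightarrow> f i \<in> Ptns \<times> UNIV\<close> by auto
    qed
  qed
  show "\<forall>g\<in>?G. restrict (\<lambda>i. Phi (restrict (\<lambda>i. Phinv (g i)) {..<t} i)) {..<t} = g"
  proof
    fix g assume g: "g \<in> ?G"
    have gi: "\<And>i. i < t \<Longrightarrow> good (g i)" using g by (auto simp: PiE_def Pi_def)
    show "restrict (\<lambda>i. Phi (restrict (\<lambda>i. Phinv (g i)) {..<t} i)) {..<t} = g"
    proof (rule PiE_ext[of _ "{..<t}" "\<lambda>_. Collect good"])
      show "g \<in> {..<t} \<rightarrow>\<^sub>E Collect good" using g by simp
      show "restrict (\<lambda>i. Phi (restrict (\<lambda>i. Phinv (g i)) {..<t} i)) {..<t} \<in> {..<t} \<rightarrow>\<^sub>E Collect good"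
        using Phi_Phinv gi by auto
      fix i assume "i \<in> {..<t}"
      then show "restrict (\<lambda>i. Phi (restrict (\<lambda>i. Phinv (g i)) {..<t} i)) {..<t} i = g i"
        using Phi_Phinv gi by auto
    qed
  qed
  show "(\<lambda>f. restrict (\<lambda>i. Phi (f i)) {..<t}) ` ?R \<subseteq> ?G"
  proof
    fix h assume "h \<in> (\<lambda>f. restrict (\<lambda>i. Phi (f i)) {..<t}) ` ?R"
    then obtain f where f: "f \<in> ?R" and h: "h = restrict (\<lambda>i. Phi (f i)) {..<t}" by blast
    have fi: "\<And>i. i < t \<Longrightarrow> f i \<in> Ptns \<times> UNIV" using f by (auto simp: PiE_def Pi_def)
    have 1: "(\<Sum>i<t. charge (h i)) = (\<Sum>i<t. snd (f i))"
      by (rule sum.cong) (auto simp: h Phi_props(2)[OF fi])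
    have 2: "(\<Sum>i<t. C i * energy (h i) + A i * charge (h i)) =
       (\<Sum>i<t. C i * int (psize (fst (f i)))) + (\<Sum>i<t. C i * binom2 (snd (f i)))
         + (\<Sum>i<t. A i * snd (f i))"
    proof -
      have "(\<Sum>i<t. C i * energy (h i) + A i * charge (h i)) =
         (\<Sum>i<t. C i * int (psize (fst (f i))) + C i * binom2 (snd (f i)) + A i * snd (f i))"
        by (rule sum.cong) (auto simp: h Phi_props(2,3)[OF fi] algebra_simps)
      then show ?thesis by (simp add: sum.distrib)
    qed
    show "h \<in> ?G" using f 1 2 Phi_props(1)[OF fi] by (auto simp: h)
  qed
  show "(\<lambda>g. restrict (\<lambda>i. Phinv (g i)) {..<t}) ` ?G \<subseteq> ?R"
  proof
    fix h assume "h \<in> (\<lambda>g. restrict (\<lambda>i. Phinv (g i)) {..<t}) ` ?G"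
    then obtain g where g: "g \<in> ?G" and h: "h = restrict (\<lambda>i. Phinv (g i)) {..<t}" by blast
    have gi: "\<And>i. i < t \<Longrightarrow> good (g i)" using g by (auto simp: PiE_def Pi_def)
    have hi: "\<And>i. i < t \<Longrightarrow> h i \<in> Ptns \<times> UNIV" "\<And>i. i < t \<Longrightarrow> Phi (h i) = g i"
      using Phi_Phinv[OF gi] h by auto
    have 1: "(\<Sum>i<t. charge (g i)) = (\<Sum>i<t. snd (h i))"
      by (rule sum.cong) (auto simp: Phi_props(2)[OF hi(1)] hi(2)[symmetric])
    have 2: "(\<Sum>i<t. C i * energy (g i) + A i * charge (g i)) =
       (\<Sum>i<t. C i * int (psize (fst (h i)))) + (\<Sum>i<t. C i * binom2 (snd (h i)))
         + (\<Sum>i<t. A i * snd (h i))"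
    proof -
      have "(\<Sum>i<t. C i * energy (g i) + A i * charge (g i)) =
         (\<Sum>i<t. C i * int (psize (fst (h i))) + C i * binom2 (snd (h i)) + A i * snd (h i))"
        by (rule sum.cong) (auto simp: hi(2)[symmetric] Phi_props(2,3)[OF hi(1)] algebra_simps)
      then show ?thesis by (simp add: sum.distrib)
    qed
    have "h \<in> {..<t} \<rightarrow>\<^sub>E Ptns \<times> UNIV" using hi(1) h by auto
    then show "h \<in> ?R" using g 1 2 by auto
  qed
qed



definition SX :: "nat \<Rightarrow> (nat \<Rightarrow> int set) \<Rightarrow> (nat \<times> int) set" where
  "SX t g = Sigma {..<t} (\<lambda>i. mX (g i))"
definition SH :: "nat \<Rightarrow> (nat \<Rightarrow> int set) \<Rightarrow> (nat \<times> int) set" where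
  "SH t g = Sigma {..<t} (\<lambda>i. mH (g i))"
definition Z0 :: "(nat \<Rightarrow> int) \<Rightarrow> (nat \<times> int) set" where
  "Z0 A = {(i, x). A i = 0 \<and> x = 0}"
definition UT where
  "UT t C A g = (\<lambda>(i, x). (i, True, A i + C i * x)) ` (SX t g - Z0 A)"
definition UF where
  "UF t C A g = (\<lambda>(i, h). (i, False, - A i - C i * h)) ` SH t g"
definition FF :: "nat \<Rightarrow> (nat \<Rightarrow> int) \<Rightarrow> (nat \<Rightarrow> int set) \<Rightarrow> nat set" where
  "FF t A g = {i. i < t \<and> A i = 0 \<and> 0 \<in> g i}"

lemma SX_fin: "g \<in> {..<t} \<rightarrow>\<^sub>E Collect good \<Longrightarrow> finite (SX t g)"
  unfolding SX_def by (rule finite_SigmaI) (auto simp: good_fin PiE_def Pi_def)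
lemma SH_fin: "g \<in> {..<t} \<rightarrow>\<^sub>E Collect good \<Longrightarrow> finite (SH t g)"
  unfolding SH_def by (rule finite_SigmaI) (auto simp: good_fin PiE_def Pi_def)

locale lset =
  fixes t :: nat and C A :: "nat \<Rightarrow> int"
  assumes Cpos: "\<And>i. i < t \<Longrightarrow> C i \<ge> 1"
    and Ab: "\<And>i. i < t \<Longrightarrow> 0 \<le> A i \<and> 2 * A i \<le> C i"

context lset
begin

lemma injT: "inj_on (\<lambda>(i, x). (i, True, A i + C i * x)) (SX t g - Z0 A)"
  unfolding inj_on_def SX_def using Cpos by fastforce

lemma injF: "inj_on (\<lambda>(i, h). (i, False, - A i - C i * h)) (SH t g)"
  unfolding inj_on_def SH_def using Cpos by fastforce

lemma L1:
  assumes g: "g \<in> {..<t} \<rightarrow>\<^sub>E Collect good"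
  shows "finite (UT t C A g \<union> UF t C A g)" "UT t C A g \<union> UF t C A g \<subseteq> S_elems t C A"
    "FF t A g \<subseteq> {i. i < t \<and> A i = 0}"
proof -
  show "finite (UT t C A g \<union> UF t C A g)" unfolding UT_def UF_def using SX_fin[OF g] SH_fin[OF g] by simp
  show "FF t A g \<subseteq> {i. i < t \<and> A i = 0}" unfolding FF_def by auto
  have "UT t C A g \<subseteq> S_elems t C A"
  proof
    fix u assume "u \<in> UT t C A g"
    then obtain i x where u: "u = (i, True, A i + C i * x)" "i < t" "0 \<le> x" "\<not> (A i = 0 \<and> x = 0)"
      unfolding UT_def SX_def Z0_def mX_def by auto
    have "0 < A i + C i * x"
    proof (cases "A i = 0")
      case True then have "0 < x" using u by auto
      then show ?thesis using Cpos[OF u(2)] True by (simp add: mult_pos_pos)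
    next
      case False then have "0 < A i" using Ab[OF u(2)] by auto
      then show ?thesis using Cpos[OF u(2)] u(3) by (simp add: add_pos_nonneg)
    qed
    moreover have "[A i + C i * x = A i] (mod C i)" by (simp add: cong_def)
    ultimately show "u \<in> S_elems t C A" unfolding S_elems_def using u by simp
  qed
  moreover have "UF t C A g \<subseteq> S_elems t C A"
  proof
    fix u assume "u \<in> UF t C A g"
    then obtain i h where u: "u = (i, False, - A i - C i * h)" "i < t" "h < 0"
      unfolding UF_def SH_def mH_def by auto
    have "C i * h \<le> C i * (-1)" using u(3) Cpos[OF u(2)] by (intro mult_left_mono) auto
    then have "0 < - A i - C i * h" using Ab[OF u(2)] Cpos[OF u(2)] by linarith
    moreover have "[- A i - C i * h = - A i] (mod C i)"
    proof -
      have "- A i - C i * h = - A i + C i * (-h)" by simp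
      then show ?thesis unfolding cong_def by (metis mod_mult_self2)
    qed
    ultimately show "u \<in> S_elems t C A" unfolding S_elems_def using u by simp
  qed
  ultimately show "UT t C A g \<union> UF t C A g \<subseteq> S_elems t C A" by blast
qed

lemma L2:
  assumes g: "g \<in> {..<t} \<rightarrow>\<^sub>E Collect good"
  shows "(\<Sum>(i, s, m)\<in>UT t C A g \<union> UF t C A g. m) = (\<Sum>i<t. C i * energy (g i) + A i * charge (g i))"
proof -
  have gi: "\<And>i. i < t \<Longrightarrow> good (g i)" using g by (auto simp: PiE_def Pi_def)
  have disj: "UT t C A g \<inter> UF t C A g = {}" unfolding UT_def UF_def by auto
  have fT: "finite (UT t C A g)" "finite (UF t C A g)" unfolding UT_def UF_def
    using SX_fin[OF g] SH_fin[OF g] by auto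
  have "(\<Sum>(i, s, m)\<in>UT t C A g. m) = (\<Sum>(i, x)\<in>SX t g - Z0 A. A i + C i * x)"
    unfolding UT_def by (subst sum.reindex[OF injT]) (simp add: case_prod_beta o_def)
  also have "\<dots> = (\<Sum>(i, x)\<in>SX t g. A i + C i * x)"
    by (rule sum.mono_neutral_left) (auto simp: SX_fin[OF g] Z0_def)
  also have "\<dots> = (\<Sum>i<t. \<Sum>x\<in>mX (g i). A i + C i * x)"
    unfolding SX_def by (rule sum.Sigma[symmetric]) (auto simp: good_fin gi)
  also have "\<dots> = (\<Sum>i<t. A i * int (card (mX (g i))) + C i * (\<Sum>x\<in>mX (g i). x))"
    by (simp add: sum.distrib sum_distrib_left ac_simps)
  finally have T: "(\<Sum>(i, s, m)\<in>UT t C A g. m) = \<dots>" .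
  have "(\<Sum>(i, s, m)\<in>UF t C A g. m) = (\<Sum>(i, h)\<in>SH t g. - A i - C i * h)"
    unfolding UF_def by (subst sum.reindex[OF injF]) (simp add: case_prod_beta o_def)
  also have "\<dots> = (\<Sum>i<t. \<Sum>h\<in>mH (g i). - A i - C i * h)"
    unfolding SH_def by (rule sum.Sigma[symmetric]) (auto simp: good_fin gi)
  also have "\<dots> = (\<Sum>i<t. - A i * int (card (mH (g i))) + C i * (\<Sum>h\<in>mH (g i). - h))"
    by (simp add: sum_subtractf sum_distrib_left sum_negf ac_simps)
  finally have F: "(\<Sum>(i, s, m)\<in>UF t C A g. m) = \<dots>" .
  have "(\<Sum>(i, s, m)\<in>UT t C A g \<union> UF t C A g. m) = (\<Sum>(i, s, m)\<in>UT t C A g. m) + (\<Sum>(i, s, m)\<in>UF t C A g. m)"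
    by (rule sum.union_disjoint[OF fT disj])
  also have "\<dots> = (\<Sum>i<t. C i * energy (g i) + A i * charge (g i))"
    unfolding T F sum.distrib[symmetric]
    by (rule sum.cong) (auto simp: energy_def charge_def algebra_simps)
  finally show ?thesis .
qed

lemma L3:
  assumes g: "g \<in> {..<t} \<rightarrow>\<^sub>E Collect good"
  shows "odd (card (UT t C A g \<union> UF t C A g) + card (FF t A g)) \<longleftrightarrow> odd (\<Sum>i<t. charge (g i))"
proof -
  have gi: "\<And>i. i < t \<Longrightarrow> good (g i)" using g by (auto simp: PiE_def Pi_def)
  have disj: "UT t C A g \<inter> UF t C A g = {}" unfolding UT_def UF_def by auto
  have fT: "finite (UT t C A g)" "finite (UF t C A g)" unfolding UT_def UF_def
    using SX_fin[OF g] SH_fin[OF g] by auto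
  have c1: "card (UT t C A g) = card (SX t g - Z0 A)" unfolding UT_def by (rule card_image[OF injT])
  have c2: "card (UF t C A g) = card (SH t g)" unfolding UF_def by (rule card_image[OF injF])
  have "FF t A g = fst ` (SX t g \<inter> Z0 A)"
  proof
    show "FF t A g \<subseteq> fst ` (SX t g \<inter> Z0 A)"
    proof
      fix i assume "i \<in> FF t A g"
      then have "(i, 0) \<in> SX t g \<inter> Z0 A" unfolding FF_def SX_def Z0_def mX_def by auto
      then show "i \<in> fst ` (SX t g \<inter> Z0 A)" by force
    qed
    show "fst ` (SX t g \<inter> Z0 A) \<subseteq> FF t A g" unfolding FF_def SX_def Z0_def mX_def by auto
  qed
  moreover have "inj_on fst (SX t g \<inter> Z0 A)" unfolding inj_on_def Z0_def by auto
  ultimately have c3: "card (FF t A g) = card (SX t g \<inter> Z0 A)" by (simp add: card_image)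
  have c4: "card (SX t g) = card (SX t g - Z0 A) + card (SX t g \<inter> Z0 A)"
  proof -
    have e: "SX t g = (SX t g - Z0 A) \<union> (SX t g \<inter> Z0 A)" by blast
    show ?thesis by (subst e, rule card_Un_disjoint) (use SX_fin[OF g] in auto)
  qed
  have c5: "card (SX t g) = (\<Sum>i<t. card (mX (g i)))" unfolding SX_def
    by (rule card_SigmaI) (auto simp: good_fin gi)
  have c6: "card (SH t g) = (\<Sum>i<t. card (mH (g i)))" unfolding SH_def
    by (rule card_SigmaI) (auto simp: good_fin gi)
  have "card (UT t C A g \<union> UF t C A g) + card (FF t A g) = (\<Sum>i<t. card (mX (g i))) + (\<Sum>i<t. card (mH (g i)))"
    using card_Un_disjoint[OF fT disj] c1 c2 c3 c4 c5 c6 by simp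
  then have "int (card (UT t C A g \<union> UF t C A g) + card (FF t A g)) = (\<Sum>i<t. charge (g i)) + 2 * (\<Sum>i<t. int (card (mH (g i))))"
    by (simp add: charge_def sum_subtractf sum_distrib_left)
  then have "odd (int (card (UT t C A g \<union> UF t C A g) + card (FF t A g))) \<longleftrightarrow> odd (\<Sum>i<t. charge (g i))"
    by simp
  then show ?thesis by simp
qed

end


definition Ginv :: "nat \<Rightarrow> (nat \<Rightarrow> int) \<Rightarrow> (nat \<Rightarrow> int) \<Rightarrow> (nat \<times> bool \<times> int) set \<Rightarrow> nat set \<Rightarrow> nat \<Rightarrow> int set" where
  "Ginv t C A U F = restrict (\<lambda>i. {x. 0 \<le> x \<and> ((i, True, A i + C i * x) \<in> U \<or> (x = 0 \<and> i \<in> F))}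
      \<union> {h. h < 0 \<and> (i, False, - A i - C i * h) \<notin> U}) {..<t}"

context lset
begin

lemma memT: "(i, True, v) \<in> UT t C A g \<longleftrightarrow> i < t \<and> (\<exists>x. x \<in> mX (g i) \<and> \<not> (A i = 0 \<and> x = 0) \<and> v = A i + C i * x)"
  unfolding UT_def SX_def Z0_def by force
lemma memF: "(i, False, v) \<in> UF t C A g \<longleftrightarrow> i < t \<and> (\<exists>h. h \<in> mH (g i) \<and> v = - A i - C i * h)"
  unfolding UF_def SH_def by force
lemma notTF: "(i, False, v) \<notin> UT t C A g" "(i, True, v) \<notin> UF t C A g"
  unfolding UT_def UF_def by auto

lemma cancelC: "i < t \<Longrightarrow> C i * x = C i * y \<longleftrightarrow> x = y"
  using Cpos[of i] by auto

lemma Ginv_good: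
  assumes U: "finite U" and i: "i < t"
  shows "good (Ginv t C A U F i)"
proof -
  have "bdd_above ((\<lambda>u. snd (snd u)) ` U)" using U by (simp add: bdd_above_finite)
  then obtain B0 where B0: "\<And>u. u \<in> U \<Longrightarrow> snd (snd u) \<le> B0" unfolding bdd_above_def by auto
  define B where "B = max B0 0"
  have B: "\<And>u. u \<in> U \<Longrightarrow> snd (snd u) \<le> B" "0 \<le> B" using B0 unfolding B_def by force+
  have c: "1 \<le> C i" "0 \<le> A i" "2 * A i \<le> C i" using Cpos[OF i] Ab[OF i] by auto
  show ?thesis unfolding good_def
  proof (intro exI conjI)
    show "{..<- B - 1} \<subseteq> Ginv t C A U F i"
    proof
      fix h assume "h \<in> {..<- B - 1}"
      then have h: "h \<le> - B - 2" by simp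
      have "C i * (B + 2) \<le> C i * (- h)" using h c by (intro mult_left_mono) auto
      moreover have "B + 1 \<le> C i * (B + 1)" using c B(2) by (simp add: mult_le_cancel_right1)
      ultimately have "B < - A i - C i * h" using c by (simp add: algebra_simps)
      then have "(i, False, - A i - C i * h) \<notin> U" using B(1) by force
      then show "h \<in> Ginv t C A U F i" unfolding Ginv_def using i h B(2) by simp
    qed
    show "Ginv t C A U F i \<subseteq> {..<B + 1}"
    proof
      fix x assume x: "x \<in> Ginv t C A U F i"
      show "x \<in> {..<B + 1}"
      proof (rule ccontr)
        assume "x \<notin> {..<B + 1}"
        then have xb: "B + 1 \<le> x" by simp
        have "x \<le> C i * x" using c xb B(2) by (simp add: mult_le_cancel_right1)
        then have "B < A i + C i * x" using c xb by simp
        then have "(i, True, A i + C i * x) \<notin> U" using B(1) by force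
        then show False using x xb B(2) i unfolding Ginv_def by auto
      qed
    qed
  qed
qed

lemma Ginv_G:
  assumes g: "g \<in> {..<t} \<rightarrow>\<^sub>E Collect good"
  shows "Ginv t C A (UT t C A g \<union> UF t C A g) (FF t A g) = g"
proof (rule ext)
  fix i show "Ginv t C A (UT t C A g \<union> UF t C A g) (FF t A g) i = g i"
  proof (cases "i < t")
    case False then show ?thesis using g unfolding Ginv_def by (auto simp: PiE_def extensional_def)
  next
    case True
    show ?thesis
    proof (rule set_eqI)
      fix y show "y \<in> Ginv t C A (UT t C A g \<union> UF t C A g) (FF t A g) i \<longleftrightarrow> y \<in> g i"
      proof (cases "0 \<le> y")
        case True2: True
        have "(i, True, A i + C i * y) \<in> UT t C A g \<longleftrightarrow> y \<in> mX (g i) \<and> \<not> (A i = 0 \<and> y = 0)"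
          unfolding memT using True cancelC[OF True] by auto
        then show ?thesis unfolding Ginv_def FF_def using True True2 notTF by (auto simp: mX_def)
      next
        case False
        have "(i, False, - A i - C i * y) \<in> UF t C A g \<longleftrightarrow> y \<in> mH (g i)"
          unfolding memF using True cancelC[OF True] by auto
        then show ?thesis unfolding Ginv_def using True False notTF by (auto simp: mH_def)
      qed
    qed
  qed
qed

lemma G_Ginv:
  assumes U: "finite U" "U \<subseteq> S_elems t C A" and F: "F \<subseteq> {i. i < t \<and> A i = 0}"
  defines "g \<equiv> Ginv t C A U F"
  shows "UT t C A g \<union> UF t C A g = U" "FF t A g = F"
proof -
  show "UT t C A g \<union> UF t C A g = U"
  proof
    show "UT t C A g \<union> UF t C A g \<subseteq> U"
    proof
      fix u assume u: "u \<in> UT t C A g \<union> UF t C A g"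
      show "u \<in> U"
      proof (cases "u \<in> UT t C A g")
        case True
        then obtain i x where ix: "u = (i, True, A i + C i * x)" "i < t" "x \<in> mX (g i)" "\<not> (A i = 0 \<and> x = 0)"
          unfolding UT_def SX_def Z0_def by auto
        then show ?thesis using F unfolding g_def Ginv_def mX_def by auto
      next
        case False
        then have "u \<in> UF t C A g" using u by auto
        then obtain i h where ih: "u = (i, False, - A i - C i * h)" "i < t" "h \<in> mH (g i)"
          unfolding UF_def SH_def by auto
        then show ?thesis unfolding g_def Ginv_def mH_def by auto
      qed
    qed
    show "U \<subseteq> UT t C A g \<union> UF t C A g"
    proof
      fix u assume uU: "u \<in> U"
      then obtain i s m where u: "u = (i, s, m)" "i < t" "0 < m"
        "if s then [m = A i] (mod C i) else [m = - A i] (mod C i)"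
        using U(2) unfolding S_elems_def by auto
      have c: "1 \<le> C i" "0 \<le> A i" "2 * A i \<le> C i" using Cpos[OF u(2)] Ab[OF u(2)] by auto
      show "u \<in> UT t C A g \<union> UF t C A g"
      proof (cases s)
        case True
        then have "C i dvd m - A i" using u(4) by (simp add: cong_iff_dvd_diff)
        then obtain x where x: "m - A i = C i * x" by (auto elim: dvdE)
        have x0: "0 \<le> x"
        proof (rule ccontr)
          assume "\<not> 0 \<le> x"
          then have "C i * x \<le> C i * (-1)" using c by (intro mult_left_mono) auto
          then show False using x u(3) c by simp
        qed
        have "A i + C i * x = m" using x by simp
        then have "(i, True, A i + C i * x) \<in> U" using uU u True by simp
        then have "x \<in> g i" unfolding g_def Ginv_def using u(2) x0 by simp
        moreover have "\<not> (A i = 0 \<and> x = 0)" using x u(3) by auto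
        ultimately have "(i, True, m) \<in> UT t C A g" unfolding memT using u(2) x0 x
          by (auto simp: mX_def intro!: exI[of _ x])
        then show ?thesis using u True by simp
      next
        case False
        then have "C i dvd m + A i" using u(4) by (simp add: cong_iff_dvd_diff)
        then obtain k where k: "m + A i = C i * k" by (auto elim: dvdE)
        have k0: "0 < k" using k u(3) c by (metis add_pos_nonneg less_le_trans order.strict_trans1
              zero_less_mult_pos linorder_not_le zero_less_one)
        have "- A i - C i * (-k) = m" using k by simp
        then have "(i, False, - A i - C i * (-k)) \<in> U" using uU u False by simp
        then have "-k \<in> mH (g i)" unfolding g_def Ginv_def mH_def using u(2) k0 by simp
        then have "(i, False, m) \<in> UF t C A g" unfolding memF using u(2) k
          by (auto intro!: exI[of _ "-k"])
        then show ?thesis using u False by simp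
      qed
    qed
  qed
  show "FF t A g = F"
  proof
    show "F \<subseteq> FF t A g" using F unfolding FF_def g_def Ginv_def by auto
    show "FF t A g \<subseteq> F"
    proof
      fix i assume "i \<in> FF t A g"
      then have i: "i < t" "A i = 0" "0 \<in> g i" unfolding FF_def by auto
      have "(i, True, 0) \<notin> U" using U(2) unfolding S_elems_def by auto
      then show "i \<in> F" using i unfolding g_def Ginv_def by auto
    qed
  qed
qed

end


context lset
begin

lemma card_G_T:
  "card {g \<in> {..<t} \<rightarrow>\<^sub>E Collect good. odd (\<Sum>i<t. charge (g i)) \<and>
       (\<Sum>i<t. C i * energy (g i) + A i * charge (g i)) = N}
   = card {(U, F). finite U \<and> U \<subseteq> S_elems t C A \<and> (\<Sum>(i, s, m)\<in>U. m) = N \<and>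
       F \<subseteq> {i. i < t \<and> A i = 0} \<and> odd (card U + card F)}"
  (is "card ?G = card ?T")
proof (rule bij_betw_same_card[of "\<lambda>g. (UT t C A g \<union> UF t C A g, FF t A g)"],
       rule bij_betw_byWitness[of _ "\<lambda>(U, F). Ginv t C A U F"])
  show "\<forall>g\<in>?G. (\<lambda>(U, F). Ginv t C A U F) (UT t C A g \<union> UF t C A g, FF t A g) = g"
    using Ginv_G by auto
  show "\<forall>p\<in>?T. (UT t C A ((\<lambda>(U, F). Ginv t C A U F) p) \<union> UF t C A ((\<lambda>(U, F). Ginv t C A U F) p),
       FF t A ((\<lambda>(U, F). Ginv t C A U F) p)) = p"
    using G_Ginv by auto
  show "(\<lambda>g. (UT t C A g \<union> UF t C A g, FF t A g)) ` ?G \<subseteq> ?T"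
  proof
    fix p assume "p \<in> (\<lambda>g. (UT t C A g \<union> UF t C A g, FF t A g)) ` ?G"
    then obtain g where g: "g \<in> ?G" and p: "p = (UT t C A g \<union> UF t C A g, FF t A g)" by auto
    have gE: "g \<in> {..<t} \<rightarrow>\<^sub>E Collect good" using g by simp
    note l1 = L1[OF gE] and l2 = L2[OF gE] and l3 = L3[OF gE]
    have "odd (card (UT t C A g \<union> UF t C A g) + card (FF t A g))" using l3 g by simp
    moreover have "(\<Sum>(i, s, m)\<in>UT t C A g \<union> UF t C A g. m) = N" using l2 g by simp
    ultimately show "p \<in> ?T" unfolding p using l1 by simp
  qed
  show "(\<lambda>(U, F). Ginv t C A U F) ` ?T \<subseteq> ?G"
  proof
    fix g assume "g \<in> (\<lambda>(U, F). Ginv t C A U F) ` ?T"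
    then obtain U F where p: "(U, F) \<in> ?T" and g: "g = Ginv t C A U F" by auto
    have gE: "g \<in> {..<t} \<rightarrow>\<^sub>E Collect good" using Ginv_good p unfolding g Ginv_def by auto
    have e: "UT t C A g \<union> UF t C A g = U" "FF t A g = F" using G_Ginv p g by auto
    show "g \<in> ?G" using L2[OF gE] L3[OF gE] e p gE by auto
  qed
qed

end

lemma parity_subsets:
  assumes "finite Z" "Z \<noteq> {}"
  shows "card {F. F \<subseteq> Z \<and> odd (k + card F)} = 2 ^ (card Z - 1)"
proof -
  obtain z where z: "z \<in> Z" using assms by auto
  define Od where "Od = {F. F \<subseteq> Z \<and> odd (k + card F)}"
  define E where "E = {F. F \<subseteq> Z \<and> \<not> odd (k + card F)}"
  define tg where "tg F = (if z \<in> F then F - {z} else insert z F)" for F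
  have fin: "\<And>F. F \<subseteq> Z \<Longrightarrow> finite F" using assms finite_subset by blast
  have tgc: "\<And>F. F \<subseteq> Z \<Longrightarrow> odd (k + card (tg F)) \<longleftrightarrow> \<not> odd (k + card F)"
  proof -
    fix F assume F: "F \<subseteq> Z"
    show "odd (k + card (tg F)) \<longleftrightarrow> \<not> odd (k + card F)"
    proof (cases "z \<in> F")
      case True
      then have "card F = Suc (card (tg F))" unfolding tg_def using card_Suc_Diff1[OF fin[OF F] True] True by simp
      then show ?thesis by simp
    next
      case False
      then have "card (tg F) = Suc (card F)" unfolding tg_def using fin[OF F] by simp
      then show ?thesis by simp
    qed
  qed
  have tgZ: "\<And>F. F \<subseteq> Z \<Longrightarrow> tg F \<subseteq> Z" unfolding tg_def using z by auto
  have tgtg: "\<And>F. tg (tg F) = F" unfolding tg_def by auto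
  have "bij_betw tg Od E"
  proof (rule bij_betw_byWitness[of _ tg])
    show "\<forall>a\<in>Od. tg (tg a) = a" "\<forall>a\<in>E. tg (tg a) = a" using tgtg by auto
    show "tg ` Od \<subseteq> E"
    proof
      fix G assume "G \<in> tg ` Od"
      then obtain F where F: "F \<in> Od" "G = tg F" by auto
      then show "G \<in> E" using tgZ[of F] tgc[of F] unfolding Od_def E_def by auto
    qed
    show "tg ` E \<subseteq> Od"
    proof
      fix G assume "G \<in> tg ` E"
      then obtain F where F: "F \<in> E" "G = tg F" by auto
      then show "G \<in> Od" using tgZ[of F] tgc[of F] unfolding Od_def E_def by auto
    qed
  qed
  then have cOE: "card Od = card E" by (rule bij_betw_same_card)
  have "Pow Z = Od \<union> E" "Od \<inter> E = {}" unfolding Od_def E_def by auto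
  moreover have "finite Od" "finite E" using assms unfolding Od_def E_def by auto
  ultimately have "card Od + card E = 2 ^ card Z" using card_Pow[of Z] card_Un_disjoint[of Od E] assms(1) by simp
  moreover have "card Z \<ge> 1" using assms by (simp add: Suc_leI card_gt_0_iff)
  moreover have "(2::nat) ^ card Z = 2 * 2 ^ (card Z - 1)"
    using \<open>card Z \<ge> 1\<close> by (metis Suc_diff_1 less_le_trans power_Suc zero_less_one)
  ultimately show ?thesis unfolding Od_def[symmetric] using cOE by simp
qed



context lset
begin

lemma V_fin:
  "finite {X. finite X \<and> X \<subseteq> S_elems t C A \<and> (\<Sum>(i, s, m)\<in>X. m) = N \<and> P X}"
proof (rule finite_subset)
  show "{X. finite X \<and> X \<subseteq> S_elems t C A \<and> (\<Sum>(i, s, m)\<in>X. m) = N \<and> P X}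
      \<subseteq> Pow ({..<t} \<times> (UNIV :: bool set) \<times> {1..N})"
  proof
    fix X assume X: "X \<in> {X. finite X \<and> X \<subseteq> S_elems t C A \<and> (\<Sum>(i, s, m)\<in>X. m) = N \<and> P X}"
    show "X \<in> Pow ({..<t} \<times> (UNIV :: bool set) \<times> {1..N})"
    proof (rule PowI, rule subsetI)
      fix u assume u: "u \<in> X"
      obtain i s m where ism: "u = (i, s, m)" by (cases u) auto
      have pos: "\<And>v. v \<in> X \<Longrightarrow> 0 < snd (snd v) \<and> fst v < t" using X unfolding S_elems_def by auto
      have "snd (snd u) \<le> (\<Sum>v\<in>X. snd (snd v))"
        by (rule member_le_sum) (use u X pos in \<open>auto simp: less_imp_le\<close>)
      also have "(\<Sum>v\<in>X. snd (snd v)) = N" using X by (simp add: case_prod_beta)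
      finally show "u \<in> {..<t} \<times> (UNIV :: bool set) \<times> {1..N}" using pos[OF u] ism by auto
    qed
  qed
  show "finite (Pow ({..<t} \<times> (UNIV :: bool set) \<times> {1..N}))" by simp
qed

lemma card_T:
  "card {(U, F). finite U \<and> U \<subseteq> S_elems t C A \<and> (\<Sum>(i, s, m)\<in>U. m) = N \<and>
       F \<subseteq> {i. i < t \<and> A i = 0} \<and> odd (card U + card F)}
   = 2 ^ (max (card {i. i < t \<and> A i = 0}) 1 - 1) * D_S t C A N"
  (is "card ?T = _")
proof -
  let ?Z = "{i. i < t \<and> A i = 0}"
  let ?V = "{X. finite X \<and> X \<subseteq> S_elems t C A \<and> (\<Sum>(i, s, m)\<in>X. m) = N \<and> ((\<forall>i<t. A i \<noteq> 0) \<longrightarrow> odd (card X))}"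
  have fZ: "finite ?Z" by simp
  show ?thesis
  proof (cases "card ?Z = 0")
    case True
    then have Ze: "?Z = {}" using fZ by simp
    then have all: "\<forall>i<t. A i \<noteq> 0" by auto
    have "?T = (\<lambda>U. (U, {})) ` ?V"
    proof (rule set_eqI)
      fix p :: "(nat \<times> bool \<times> int) set \<times> nat set"
      obtain U F where p: "p = (U, F)" by (cases p)
      show "p \<in> ?T \<longleftrightarrow> p \<in> (\<lambda>U. (U, {})) ` ?V"
      proof
        assume "p \<in> ?T"
        then have "F = {}" "U \<in> ?V" using Ze all p by auto
        then show "p \<in> (\<lambda>U. (U, {})) ` ?V" using p by auto
      next
        assume "p \<in> (\<lambda>U. (U, {})) ` ?V"
        then have "F = {}" "U \<in> ?V" using p by auto
        then show "p \<in> ?T" using all p by auto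
      qed
    qed
    then have "card ?T = card ?V" by (simp add: card_image inj_on_def)
    then show ?thesis using True unfolding D_S_def by simp
  next
    case False
    then have nall: "\<not> (\<forall>i<t. A i \<noteq> 0)" by auto
    let ?W = "{X. finite X \<and> X \<subseteq> S_elems t C A \<and> (\<Sum>(i, s, m)\<in>X. m) = N \<and> True}"
    have VW: "?V = ?W" using nall by auto
    have "?T = Sigma ?W (\<lambda>U. {F. F \<subseteq> ?Z \<and> odd (card U + card F)})" by auto
    moreover have "card (Sigma ?W (\<lambda>U. {F. F \<subseteq> ?Z \<and> odd (card U + card F)}))
       = (\<Sum>U\<in>?W. card {F. F \<subseteq> ?Z \<and> odd (card U + card F)})"
    proof (rule card_SigmaI)
      show "finite ?W" by (rule V_fin[where P="\<lambda>_. True"])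
      show "\<forall>U\<in>?W. finite {F. F \<subseteq> ?Z \<and> odd (card U + card F)}"
        by (intro ballI, rule finite_subset[of _ "Pow ?Z"]) auto
    qed
    ultimately have "card ?T = (\<Sum>U\<in>?W. card {F. F \<subseteq> ?Z \<and> odd (card U + card F)})"
      by simp
    also have "\<dots> = (\<Sum>U\<in>?W. 2 ^ (card ?Z - 1))"
      by (rule sum.cong) (use parity_subsets[OF fZ] False in auto)
    also have "\<dots> = 2 ^ (card ?Z - 1) * card ?W" by simp
    finally have cT: "card ?T = 2 ^ (card ?Z - 1) * card ?W" .
    have mx: "max (card ?Z) 1 - 1 = card ?Z - 1" using False by simp
    have "D_S t C A N = card ?W" unfolding D_S_def using VW by simp
    then show ?thesis using cT mx by metis
  qed
qed

end

theorem lemma2p2: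
  fixes t :: nat and C A :: "nat \<Rightarrow> int" and N :: int
  assumes "t \<ge> 1"
    and "\<And>i. i < t \<Longrightarrow> C i \<ge> 1"
    and "\<And>i. i < t \<Longrightarrow> 0 \<le> A i \<and> 2 * A i \<le> C i"
    and "N \<ge> 1"
  shows "2 ^ (max (card {i. i < t \<and> A i = 0}) 1 - 1) * D_S t C A N =
    card {f \<in> {..<t} \<rightarrow>\<^sub>E (Ptns \<times> (UNIV :: int set)).
       odd (\<Sum>i<t. snd (f i)) \<and>
       (\<Sum>i<t. C i * int (psize (fst (f i)))) + (\<Sum>i<t. C i * binom2 (snd (f i)))
         + (\<Sum>i<t. A i * snd (f i)) = N}"
proof -
  interpret lset t C A using assms(2,3) by unfold_locales auto
  show ?thesis unfolding card_R_G card_G_T card_T ..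
qed


end
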